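(* Let $\Omega_\star$ be a discrete filtered set centred at $\omega\in\mathbb{C}$. Then the direct limit $\Omega^\infty_\star=\varinjlim_n \sum_{n\ast}\Omega_\star$ of its iterated fine sums is a discrete filtered set centred at $\omega$.
   Context: A discrete filtered set centred at $\omega$ is a family $\Omega_\star=(\Omega_L)_{L>0}$ of finite subsets of $\mathbb{C}$ with $\Omega_L\subset D(\omega,L)$ (open disc) for every $L>0$, $\Omega_{L_1}\subseteq\Omega_{L_2}$ whenever $L_1\le L_2$, and $\Omega_L=\{\omega\}$ for all sufficiently small $L>0$. The fine sum of two discrete filtered sets centred at $\omega$ is given by $(\Omega_\star\ast\Omega'_\star)_L=\{-\omega+\omega_1+\omega_2:\omega_1\in\Omega_{L_1},\omega_2\in\Omega'_{L_2},L_1+L_2=L\}$. $\sum_{n\ast}\Omega_\star$ denotes the $n$-fold fine sum $\Omega_\star\ast\cdots\ast\Omega_\star$; for each $L$ these form a direct system via the inclusions $(\sum_{n\ast}\Omega_\star)_L\hookrightarrow(\sum_{(n+1)\ast}\Omega_\star)_L$, and the direct limit is $L\mapsto\bigcup_n(\sum_{n\ast}\Omega_\star)_L$. *)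

theory Defs
  imports "HOL-Analysis.Analysis"
begin

text \<open>A filtered set is a family indexed by L > 0; values at L \<le> 0 are irrelevant.\<close>
definition discrete_filtered_set :: "(real \<Rightarrow> complex set) \<Rightarrow> complex \<Rightarrow> bool" where
  "discrete_filtered_set \<Omega> \<omega> \<longleftrightarrow>
     (\<forall>L>0. finite (\<Omega> L) \<and> \<Omega> L \<subseteq> ball \<omega> L) \<and>
     (\<forall>L1 L2. 0 < L1 \<and> L1 \<le> L2 \<longrightarrow> \<Omega> L1 \<subseteq> \<Omega> L2) \<and>
     (\<exists>\<epsilon>>0. \<forall>L. 0 < L \<and> L < \<epsilon> \<longrightarrow> \<Omega> L = {\<omega>})"

definition fs_ext :: "(real \<Rightarrow> complex set) \<Rightarrow> complex \<Rightarrow> real \<Rightarrow> complex set" where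
  "fs_ext \<Omega> \<omega> L = (if L \<le> 0 then {\<omega>} else \<Omega> L)"

definition fine_sum :: "complex \<Rightarrow> (real \<Rightarrow> complex set) \<Rightarrow> (real \<Rightarrow> complex set) \<Rightarrow> (real \<Rightarrow> complex set)" where
  "fine_sum \<omega> \<Omega> \<Omega>' L =
     {- \<omega> + w1 + w2 | w1 w2 L1 L2. 0 \<le> L1 \<and> 0 \<le> L2 \<and> L1 + L2 = L \<and>
        w1 \<in> fs_ext \<Omega> \<omega> L1 \<and> w2 \<in> fs_ext \<Omega>' \<omega> L2}"

fun fine_sum_pow :: "complex \<Rightarrow> (real \<Rightarrow> complex set) \<Rightarrow> nat \<Rightarrow> (real \<Rightarrow> complex set)" where
  "fine_sum_pow \<omega> \<Omega> 0 = (\<lambda>L. {\<omega>})"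
| "fine_sum_pow \<omega> \<Omega> (Suc 0) = \<Omega>"
| "fine_sum_pow \<omega> \<Omega> (Suc (Suc n)) = fine_sum \<omega> (fine_sum_pow \<omega> \<Omega> (Suc n)) \<Omega>"

definition fine_sum_limit :: "complex \<Rightarrow> (real \<Rightarrow> complex set) \<Rightarrow> (real \<Rightarrow> complex set)" where
  "fine_sum_limit \<omega> \<Omega> L = (\<Union>n\<in>{1..}. fine_sum_pow \<omega> \<Omega> n L)"

end

theory Submission
  imports Defs
begin

lemma dfs_unfold:
  assumes "discrete_filtered_set \<Omega> \<omega>"
  obtains \<epsilon> where "\<epsilon> > 0" "\<And>L. 0 < L \<Longrightarrow> L < \<epsilon> \<Longrightarrow> \<Omega> L = {\<omega>}"
    "\<And>L. L > 0 \<Longrightarrow> finite (\<Omega> L)" "\<And>L. L > 0 \<Longrightarrow> \<Omega> L \<subseteq> ball \<omega> L"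
    "\<And>L1 L2. 0 < L1 \<Longrightarrow> L1 \<le> L2 \<Longrightarrow> \<Omega> L1 \<subseteq> \<Omega> L2"
  using assms unfolding discrete_filtered_set_def by metis

lemma dfs_center:
  assumes "discrete_filtered_set \<Omega> \<omega>" "L > 0"
  shows "\<omega> \<in> \<Omega> L"
proof -
  obtain \<epsilon> where e: "\<epsilon> > 0" "\<And>L. 0 < L \<Longrightarrow> L < \<epsilon> \<Longrightarrow> \<Omega> L = {\<omega>}"
    and m: "\<And>L1 L2. 0 < L1 \<Longrightarrow> L1 \<le> L2 \<Longrightarrow> \<Omega> L1 \<subseteq> \<Omega> L2"
    using dfs_unfold[OF assms(1)] by metis
  have "\<Omega> (min L (\<epsilon>/2)) = {\<omega>}" by (rule e(2)) (use e assms(2) in auto)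
  moreover have "\<Omega> (min L (\<epsilon>/2)) \<subseteq> \<Omega> L" by (rule m) (use e assms(2) in auto)
  ultimately show ?thesis by auto
qed

lemma dfs_big:
  assumes "discrete_filtered_set \<Omega> \<omega>" "\<epsilon> > 0" "\<And>L. 0 < L \<Longrightarrow> L < \<epsilon> \<Longrightarrow> \<Omega> L = {\<omega>}"
    "L > 0" "w \<in> \<Omega> L" "w \<noteq> \<omega>"
  shows "L \<ge> \<epsilon>"
  using assms by (metis not_le singletonD)


lemma pow_center:
  assumes "discrete_filtered_set \<Omega> \<omega>"
  shows "L > 0 \<Longrightarrow> \<omega> \<in> fine_sum_pow \<omega> \<Omega> (Suc n) L"
proof (induction n arbitrary: L)
  case 0 then show ?case using dfs_center[OF assms] by simp
next
  case (Suc n)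
  have "- \<omega> + \<omega> + \<omega> \<in> fine_sum \<omega> (fine_sum_pow \<omega> \<Omega> (Suc n)) \<Omega> L"
    unfolding fine_sum_def fs_ext_def
    apply (rule CollectI)
    apply (rule exI[of _ \<omega>], rule exI[of _ \<omega>], rule exI[of _ L], rule exI[of _ 0])
    using Suc by auto
  then show ?case by simp
qed

lemma fs_ext_mono:
  assumes "\<And>L. L > 0 \<Longrightarrow> \<omega> \<in> A L" "\<And>L1 L2. 0 < L1 \<Longrightarrow> L1 \<le> L2 \<Longrightarrow> A L1 \<subseteq> A L2"
    "0 \<le> L1" "L1 \<le> L2"
  shows "fs_ext A \<omega> L1 \<subseteq> fs_ext A \<omega> L2"
  using assms unfolding fs_ext_def by auto

lemma pow_mono:
  assumes "discrete_filtered_set \<Omega> \<omega>"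
  shows "0 < L1 \<Longrightarrow> L1 \<le> L2 \<Longrightarrow> fine_sum_pow \<omega> \<Omega> (Suc n) L1 \<subseteq> fine_sum_pow \<omega> \<Omega> (Suc n) L2"
proof (induction n arbitrary: L1 L2)
  case 0 then show ?case using assms unfolding discrete_filtered_set_def by simp
next
  case (Suc n)
  have m1: "fs_ext (fine_sum_pow \<omega> \<Omega> (Suc n)) \<omega> a \<subseteq> fs_ext (fine_sum_pow \<omega> \<Omega> (Suc n)) \<omega> b"
    if "0 \<le> a" "a \<le> b" for a b
    by (rule fs_ext_mono[OF _ _ that]) (use pow_center[OF assms] Suc.IH in auto)
  have m2: "fs_ext \<Omega> \<omega> a \<subseteq> fs_ext \<Omega> \<omega> b" if "0 \<le> a" "a \<le> b" for a b
    by (rule fs_ext_mono[OF _ _ that]) (use dfs_center[OF assms] assms in \<open>auto simp: discrete_filtered_set_def\<close>)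
  show ?case
  proof
    fix z assume "z \<in> fine_sum_pow \<omega> \<Omega> (Suc (Suc n)) L1"
    then obtain w1 w2 a b where z: "z = - \<omega> + w1 + w2" "0 \<le> a" "0 \<le> b" "a + b = L1"
      "w1 \<in> fs_ext (fine_sum_pow \<omega> \<Omega> (Suc n)) \<omega> a" "w2 \<in> fs_ext \<Omega> \<omega> b"
      by (auto simp: fine_sum_def)
    have "w2 \<in> fs_ext \<Omega> \<omega> (b + (L2 - L1))" using m2[of b "b + (L2 - L1)"] z Suc.prems by auto
    then show "z \<in> fine_sum_pow \<omega> \<Omega> (Suc (Suc n)) L2"
      unfolding fine_sum_pow.simps fine_sum_def
      using z Suc.prems by (intro CollectI exI[of _ w1] exI[of _ w2] exI[of _ a] exI[of _ "b + (L2 - L1)"]) auto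
  qed
qed


definition Pset :: "(real \<Rightarrow> complex set) \<Rightarrow> complex \<Rightarrow> real \<Rightarrow> real \<Rightarrow> complex set" where
  "Pset \<Omega> \<omega> \<epsilon> L = {\<omega> + sum_list ds | ds. set ds \<subseteq> (\<lambda>w. w - \<omega>) ` \<Omega> L \<and> real (length ds) * \<epsilon> \<le> L}"

lemma base_in:
  assumes "discrete_filtered_set \<Omega> \<omega>" "\<epsilon> > 0" "\<And>L. 0 < L \<Longrightarrow> L < \<epsilon> \<Longrightarrow> \<Omega> L = {\<omega>}"
    "L > 0" "z \<in> \<Omega> L"
  shows "dist \<omega> z < L \<and> z \<in> Pset \<Omega> \<omega> \<epsilon> L"
proof -
  have "dist \<omega> z < L" using assms(1,4,5) unfolding discrete_filtered_set_def by (meson mem_ball subsetD)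
  moreover have "z \<in> Pset \<Omega> \<omega> \<epsilon> L"
  proof (cases "z = \<omega>")
    case True then show ?thesis unfolding Pset_def using assms(4)
      by (intro CollectI exI[of _ "[]"]) auto
  next
    case False
    then have "L \<ge> \<epsilon>" using dfs_big[OF assms(1-3,4,5)] by auto
    then show ?thesis unfolding Pset_def using assms(4,5)
      by (intro CollectI exI[of _ "[z - \<omega>]"]) auto
  qed
  ultimately show ?thesis by blast
qed

lemma pow_bound:
  assumes dfs: "discrete_filtered_set \<Omega> \<omega>" and e: "\<epsilon> > 0" "\<And>L. 0 < L \<Longrightarrow> L < \<epsilon> \<Longrightarrow> \<Omega> L = {\<omega>}"
  shows "L > 0 \<Longrightarrow> z \<in> fine_sum_pow \<omega> \<Omega> (Suc n) L \<Longrightarrow> dist \<omega> z < L \<and> z \<in> Pset \<Omega> \<omega> \<epsilon> L"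
proof (induction n arbitrary: L z)
  case 0 then show ?case using base_in[OF dfs e] by simp
next
  case (Suc n)
  have mono: "\<And>L1 L2. 0 < L1 \<Longrightarrow> L1 \<le> L2 \<Longrightarrow> \<Omega> L1 \<subseteq> \<Omega> L2"
    using dfs unfolding discrete_filtered_set_def by blast
  have ball: "\<And>L w. 0 < L \<Longrightarrow> w \<in> \<Omega> L \<Longrightarrow> dist \<omega> w < L"
    using dfs unfolding discrete_filtered_set_def by (meson mem_ball subsetD)
  from Suc.prems(2) obtain w1 w2 a b where z: "z = - \<omega> + w1 + w2" "0 \<le> a" "0 \<le> b" "a + b = L"
      "w1 \<in> fs_ext (fine_sum_pow \<omega> \<Omega> (Suc n)) \<omega> a" "w2 \<in> fs_ext \<Omega> \<omega> b"
    by (auto simp: fine_sum_def)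
  show ?case
  proof (cases "a = 0")
    case True
    then have "w1 = \<omega>" "z = w2" "b = L" using z by (auto simp: fs_ext_def)
    then show ?thesis using base_in[OF dfs e Suc.prems(1)] z(6) Suc.prems(1) by (auto simp: fs_ext_def)
  next
    case False
    then have a: "a > 0" using z by auto
    have w1: "w1 \<in> fine_sum_pow \<omega> \<Omega> (Suc n) a" using z a by (auto simp: fs_ext_def)
    from Suc.IH[OF a w1] obtain ds where d1: "dist \<omega> w1 < a" "w1 = \<omega> + sum_list ds"
      "set ds \<subseteq> (\<lambda>w. w - \<omega>) ` \<Omega> a" "real (length ds) * \<epsilon> \<le> a"
      unfolding Pset_def by blast
    have sub_a: "(\<lambda>w. w - \<omega>) ` \<Omega> a \<subseteq> (\<lambda>w. w - \<omega>) ` \<Omega> L" using mono[OF a, of L] z by auto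
    show ?thesis
    proof (cases "b = 0")
      case True
      then have "w2 = \<omega>" "z = w1" using z by (auto simp: fs_ext_def)
      then show ?thesis using d1 sub_a z True unfolding Pset_def
        by (intro conjI CollectI exI[of _ ds]) (auto simp: add.commute)
    next
      case False
      then have b: "b > 0" using z by auto
      have w2: "w2 \<in> \<Omega> b" using z b by (auto simp: fs_ext_def)
      have db: "dist \<omega> w2 < b" using ball[OF b w2] .
      have zz: "z - \<omega> = (w1 - \<omega>) + (w2 - \<omega>)" using z(1) by simp
      have "dist \<omega> z = norm (z - \<omega>)" by (simp add: dist_norm norm_minus_commute)
      also have "\<dots> = norm ((w1 - \<omega>) + (w2 - \<omega>))" by (simp only: zz)
      also have "\<dots> \<le> norm (w1 - \<omega>) + norm (w2 - \<omega>)" by (rule norm_triangle_ineq)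
      also have "\<dots> < a + b" using d1(1) db by (simp add: dist_norm norm_minus_commute)
      finally have dz: "dist \<omega> z < L" using z by simp
      have sub_b: "(\<lambda>w. w - \<omega>) ` \<Omega> b \<subseteq> (\<lambda>w. w - \<omega>) ` \<Omega> L" using mono[OF b, of L] z a by auto
      show ?thesis
      proof (cases "w2 = \<omega>")
        case True
        then show ?thesis using dz d1 sub_a z b unfolding Pset_def
          by (intro conjI CollectI exI[of _ ds]) auto
      next
        case False
        have "b \<ge> \<epsilon>" using dfs_big[OF dfs e b w2 False] .
        then have len: "real (length (ds @ [w2 - \<omega>])) * \<epsilon> \<le> L"
          using d1(4) z by (simp add: algebra_simps)
        have "set (ds @ [w2 - \<omega>]) \<subseteq> (\<lambda>w. w - \<omega>) ` \<Omega> L" using d1(3) sub_a sub_b w2 by auto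
        then show ?thesis using dz len d1 z unfolding Pset_def
          by (intro conjI CollectI exI[of _ "ds @ [w2 - \<omega>]"]) auto
      qed
    qed
  qed
qed

lemma Pset_finite:
  assumes "finite (\<Omega> L)" "\<epsilon> > 0"
  shows "finite (Pset \<Omega> \<omega> \<epsilon> L)"
proof -
  let ?N = "nat \<lceil>L / \<epsilon>\<rceil>"
  have "Pset \<Omega> \<omega> \<epsilon> L \<subseteq> (\<lambda>ds. \<omega> + sum_list ds) ` {ds. set ds \<subseteq> (\<lambda>w. w - \<omega>) ` \<Omega> L \<and> length ds \<le> ?N}"
  proof
    fix z assume "z \<in> Pset \<Omega> \<omega> \<epsilon> L"
    then obtain ds where ds: "z = \<omega> + sum_list ds" "set ds \<subseteq> (\<lambda>w. w - \<omega>) ` \<Omega> L"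
      "real (length ds) * \<epsilon> \<le> L" unfolding Pset_def by blast
    have "real (length ds) \<le> L / \<epsilon>" using ds(3) assms(2) by (simp add: field_simps)
    then have "length ds \<le> ?N" by linarith
    then show "z \<in> (\<lambda>ds. \<omega> + sum_list ds) ` {ds. set ds \<subseteq> (\<lambda>w. w - \<omega>) ` \<Omega> L \<and> length ds \<le> ?N}"
      using ds by blast
  qed
  moreover have "finite {ds. set ds \<subseteq> (\<lambda>w. w - \<omega>) ` \<Omega> L \<and> length ds \<le> ?N}"
    using finite_lists_length_le[of "(\<lambda>w. w - \<omega>) ` \<Omega> L" ?N] assms(1) by auto
  ultimately show ?thesis using finite_subset by blast
qed

theorem proposition2p4:
  fixes \<Omega> :: "real \<Rightarrow> complex set" and \<omega> :: complex
  assumes "discrete_filtered_set \<Omega> \<omega>"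
  shows "discrete_filtered_set (fine_sum_limit \<omega> \<Omega>) \<omega>"
proof -
  obtain \<epsilon> where e: "\<epsilon> > 0" "\<And>L. 0 < L \<Longrightarrow> L < \<epsilon> \<Longrightarrow> \<Omega> L = {\<omega>}"
    and fin: "\<And>L. L > 0 \<Longrightarrow> finite (\<Omega> L)"
    using dfs_unfold[OF assms] by metis
  have un: "fine_sum_limit \<omega> \<Omega> L = (\<Union>n. fine_sum_pow \<omega> \<Omega> (Suc n) L)" for L
  proof -
    have "{1::nat..} = range Suc"
      by (auto simp: image_iff) (metis Suc_le_D)
    then show ?thesis unfolding fine_sum_limit_def by simp
  qed
  have sub: "fine_sum_limit \<omega> \<Omega> L \<subseteq> Pset \<Omega> \<omega> \<epsilon> L \<inter> ball \<omega> L" if "L > 0" for L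
    using pow_bound[OF assms e(1) e(2) that] unfolding un by (auto simp: mem_ball)
  have A: "\<forall>L>0. finite (fine_sum_limit \<omega> \<Omega> L) \<and> fine_sum_limit \<omega> \<Omega> L \<subseteq> ball \<omega> L"
  proof (intro allI impI conjI)
    fix L :: real assume L: "L > 0"
    show "finite (fine_sum_limit \<omega> \<Omega> L)"
      using sub[OF L] Pset_finite[of \<Omega> L \<epsilon> \<omega>, OF fin[OF L] e(1)] by (meson finite_subset inf.boundedE)
    show "fine_sum_limit \<omega> \<Omega> L \<subseteq> ball \<omega> L" using sub[OF L] by blast
  qed
  have B: "\<forall>L1 L2. 0 < L1 \<and> L1 \<le> L2 \<longrightarrow> fine_sum_limit \<omega> \<Omega> L1 \<subseteq> fine_sum_limit \<omega> \<Omega> L2"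
    unfolding un using pow_mono[OF assms] by blast
  have C: "fine_sum_limit \<omega> \<Omega> L = {\<omega>}" if "0 < L" "L < \<epsilon>" for L
  proof
    have "\<omega> \<in> fine_sum_limit \<omega> \<Omega> L" unfolding un using pow_center[OF assms that(1), of 0] by blast
    then show "{\<omega>} \<subseteq> fine_sum_limit \<omega> \<Omega> L" by auto
    have "Pset \<Omega> \<omega> \<epsilon> L \<subseteq> {\<omega>}"
    proof
      fix z assume "z \<in> Pset \<Omega> \<omega> \<epsilon> L"
      then obtain ds where ds: "z = \<omega> + sum_list ds" "real (length ds) * \<epsilon> \<le> L"
        unfolding Pset_def by blast
      have "length ds = 0"
      proof (rule ccontr)
        assume "length ds \<noteq> 0"
        then have "real (length ds) \<ge> 1" by (simp add: Suc_le_eq)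
        then have "real (length ds) * \<epsilon> \<ge> 1 * \<epsilon>" using e(1) by (intro mult_right_mono) auto
        then show False using ds that by linarith
      qed
      then show "z \<in> {\<omega>}" using ds by simp
    qed
    then show "fine_sum_limit \<omega> \<Omega> L \<subseteq> {\<omega>}" using sub[OF that(1)] by blast
  qed
  show ?thesis unfolding discrete_filtered_set_def using A B C e(1) by (intro conjI exI[of _ \<epsilon>]) auto
qed

end
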